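(* Let $H$ be a graph with vertices $v$ and $w$ such that $\deg(v)=\deg(w)=1$ and $v$ and $w$ have no neighbors in common. Let $G$ be the graph formed from $H$ by adding a new vertex $u$ of degree 2 which is adjacent to $v$ and $w$. If there is an orthogonal vector representation of $\overline{H}$ in $\mathbb{R}^3$ which assigns distinct nonzero vectors to each vertex, then there is such an orthogonal vector representation of $\overline{G}$ in $\mathbb{R}^3$. Hence ${\rm mvr}(\overline{G})\le 3$.
   Context: All graphs are finite and simple; $\overline{G}$ denotes the complement of $G$. An orthogonal vector representation of a graph $G=(V,E)$ in $\mathbb{R}^d$ is a map $\phi:V\to\mathbb{R}^d$ with $\phi(v)\neq 0$ for all $v$, and for distinct $u,v$: $\langle\phi(u),\phi(v)\rangle=0$ if and only if $uv\notin E$. ${\rm mvr}(G)$ is the smallest $d$ for which such a representation exists. *)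

theory Defs
  imports Complex_Main
begin

definition graph :: "'a set \<Rightarrow> ('a \<Rightarrow> 'a \<Rightarrow> bool) \<Rightarrow> bool" where
  "graph V E \<longleftrightarrow> finite V \<and> (\<forall>x y. E x y \<longrightarrow> x \<in> V \<and> y \<in> V)
     \<and> (\<forall>x y. E x y \<longrightarrow> E y x) \<and> (\<forall>x. \<not> E x x)"

definition degree :: "'a set \<Rightarrow> ('a \<Rightarrow> 'a \<Rightarrow> bool) \<Rightarrow> 'a \<Rightarrow> nat" where
  "degree V E x = card {y \<in> V. E x y}"

definition compl_graph :: "'a set \<Rightarrow> ('a \<Rightarrow> 'a \<Rightarrow> bool) \<Rightarrow> ('a \<Rightarrow> 'a \<Rightarrow> bool)" where
  "compl_graph V E = (\<lambda>x y. x \<in> V \<and> y \<in> V \<and> x \<noteq> y \<and> \<not> E x y)"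

text \<open>Vectors of R^d are represented as functions nat => real vanishing outside {..<d};
  the standard inner product is the sum over coordinates below d.\<close>
definition dot :: "nat \<Rightarrow> (nat \<Rightarrow> real) \<Rightarrow> (nat \<Rightarrow> real) \<Rightarrow> real" where
  "dot d x y = (\<Sum>i<d. x i * y i)"

definition orth_rep :: "'a set \<Rightarrow> ('a \<Rightarrow> 'a \<Rightarrow> bool) \<Rightarrow> nat \<Rightarrow> ('a \<Rightarrow> nat \<Rightarrow> real) \<Rightarrow> bool" where
  "orth_rep V E d \<phi> \<longleftrightarrow>
     (\<forall>x\<in>V. (\<forall>i. d \<le> i \<longrightarrow> \<phi> x i = 0) \<and> (\<exists>i<d. \<phi> x i \<noteq> 0)) \<and>
     (\<forall>x\<in>V. \<forall>y\<in>V. x \<noteq> y \<longrightarrow> (dot d (\<phi> x) (\<phi> y) = 0 \<longleftrightarrow> \<not> E x y))"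

definition mvr :: "'a set \<Rightarrow> ('a \<Rightarrow> 'a \<Rightarrow> bool) \<Rightarrow> nat" where
  "mvr V E = (LEAST d. \<exists>\<phi>. orth_rep V E d \<phi>)"

end

theory Submission
  imports Defs
begin

definition d3 :: "(nat \<Rightarrow> real) \<Rightarrow> (nat \<Rightarrow> real) \<Rightarrow> real" where
 "d3 x y = x 0 * y 0 + x 1 * y 1 + x 2 * y 2"
definition vec3 :: "(nat \<Rightarrow> real) \<Rightarrow> bool" where "vec3 x = (\<forall>i\<ge>3. x i = 0)"
definition nz :: "(nat \<Rightarrow> real) \<Rightarrow> bool" where "nz x = (x 0 \<noteq> 0 \<or> x 1 \<noteq> 0 \<or> x 2 \<noteq> 0)"
definition crs :: "(nat \<Rightarrow> real) \<Rightarrow> (nat \<Rightarrow> real) \<Rightarrow> (nat \<Rightarrow> real)" where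
 "crs x y = (\<lambda>i. if i = 0 then x 1 * y 2 - x 2 * y 1 else if i = 1 then x 2 * y 0 - x 0 * y 2
     else if i = 2 then x 0 * y 1 - x 1 * y 0 else 0)"

lemma crs_simps[simp]: "crs x y 0 = x 1 * y 2 - x 2 * y 1" "crs x y 1 = x 2 * y 0 - x 0 * y 2"
  "crs x y 2 = x 0 * y 1 - x 1 * y 0" "crs x y (Suc 0) = x 2 * y 0 - x 0 * y 2" by (simp_all add: crs_def)
lemma vec3_crs[simp]: "vec3 (crs x y)" by (simp add: vec3_def crs_def)
lemma dot3: "dot 3 x y = d3 x y" by (simp add: dot_def d3_def eval_nat_numeral)
lemma d3_comm: "d3 x y = d3 y x" by (simp add: d3_def mult.commute)
lemma nz_iff: "vec3 x \<Longrightarrow> (\<exists>i<3. x i \<noteq> 0) \<longleftrightarrow> nz x"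
  by (auto simp: nz_def eval_nat_numeral less_Suc_eq)
lemma vec3_eq: "vec3 x \<Longrightarrow> vec3 y \<Longrightarrow> x = y \<longleftrightarrow> (x 0 = y 0 \<and> x 1 = y 1 \<and> x 2 = y 2)"
  apply (rule iffI, simp)
  apply (rule ext)
  subgoal for i by (cases "i < 3") (auto simp: vec3_def eval_nat_numeral less_Suc_eq)
  done
lemma d3_self_pos: "nz x \<Longrightarrow> d3 x x > 0"
proof -
  have a: "x i * x i \<ge> 0" for i by simp
  assume "nz x"
  then have "x 0 * x 0 > 0 \<or> x 1 * x 1 > 0 \<or> x 2 * x 2 > 0" unfolding nz_def
    by (metis not_real_square_gt_zero)
  then show ?thesis unfolding d3_def using a[of 0] a[of 1] a[of 2] by linarith
qed
lemma d3_self_nz: "nz x \<Longrightarrow> d3 x x \<noteq> 0" using d3_self_pos[of x] by simp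
lemma nz_d3: "d3 x y \<noteq> 0 \<Longrightarrow> nz x" by (auto simp: nz_def d3_def)
lemma nz_d3': "d3 x y \<noteq> 0 \<Longrightarrow> nz y" by (auto simp: nz_def d3_def)

lemma fin_lin: fixes a b :: real assumes "a \<noteq> 0 \<or> b \<noteq> 0" shows "finite {t. a + t * b = 0}"
proof (cases "b = 0")
  case True then show ?thesis using assms by simp
next
  case False
  have "{t. a + t * b = 0} \<subseteq> {- a / b}" using False by (auto simp: field_simps)
  then show ?thesis using finite_subset by blast
qed

lemma par: fixes a b g :: "nat \<Rightarrow> real"
  assumes "nz g" and "\<not> nz (crs a g)" "\<not> nz (crs b g)" shows "\<not> nz (crs a b)"
proof -
  have h: "a 1*g 2 - a 2*g 1 = 0" "a 2*g 0 - a 0*g 2 = 0" "a 0*g 1 - a 1*g 0 = 0"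
   "b 1*g 2 - b 2*g 1 = 0" "b 2*g 0 - b 0*g 2 = 0" "b 0*g 1 - b 1*g 0 = 0"
    using assms(2,3) by (auto simp: nz_def)
  have "g 0^2*(a 1*b 2 - a 2*b 1) = 0 \<and> g 0^2*(a 2*b 0 - a 0*b 2) = 0 \<and> g 0^2*(a 0*b 1-a 1*b 0) = 0
      \<and> g 1^2*(a 1*b 2 - a 2*b 1) = 0 \<and> g 1^2*(a 2*b 0 - a 0*b 2) = 0 \<and> g 1^2*(a 0*b 1-a 1*b 0) = 0
      \<and> g 2^2*(a 1*b 2 - a 2*b 1) = 0 \<and> g 2^2*(a 2*b 0 - a 0*b 2) = 0 \<and> g 2^2*(a 0*b 1-a 1*b 0) = 0"
    using h by algebra
  then show ?thesis using assms(1) by (auto simp: nz_def)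
qed

lemma Klem: fixes k d m r g :: "nat \<Rightarrow> real"
  assumes "nz d" "d3 d m = 0" "d3 r m \<noteq> 0" "nz (crs r g)"
  shows "d3 (crs r g) d \<noteq> 0 \<or> d3 (crs r g) (crs m d) \<noteq> 0"
proof (rule ccontr)
  let ?k = "crs r g"
  assume "\<not> ?thesis"
  then have h: "d3 ?k d = 0" "d3 ?k (crs m d) = 0" by auto
  have "d3 d d * crs ?k m 0 = 0 \<and> d3 d d * crs ?k m 1 = 0 \<and> d3 d d * crs ?k m 2 = 0"
    using h assms(2) unfolding d3_def crs_simps by algebra
  then have c: "crs ?k m 0 = 0" "crs ?k m 1 = 0" "crs ?k m 2 = 0"
    using d3_self_nz[OF assms(1)] by auto
  have "d3 r m * ?k 0 = 0 \<and> d3 r m * ?k 1 = 0 \<and> d3 r m * ?k 2 = 0"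
    using c unfolding d3_def crs_simps by algebra
  then show False using assms(3,4) by (auto simp: nz_def)
qed

lemma crs_nz_orth: assumes "nz p" "nz q" "d3 p q = 0" shows "nz (crs p q)"
proof (rule ccontr)
  assume "\<not> nz (crs p q)"
  then have "crs p q 0 = 0" "crs p q 1 = 0" "crs p q 2 = 0" by (auto simp: nz_def)
  then have "d3 p p * d3 q q = (d3 p q)^2" unfolding d3_def crs_simps by algebra
  then show False using assms d3_self_pos[of p] d3_self_pos[of q] by simp
qed

lemma triple: "d3 (crs p q) g = d3 p (crs q g)" by (simp add: d3_def crs_def algebra_simps)
lemma triple2: "d3 (crs p q) g = - d3 q (crs p g)" by (simp add: d3_def crs_def algebra_simps)
lemma crs_orth1: "d3 (crs p q) p = 0" by (simp add: d3_def crs_def algebra_simps)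
lemma crs_orth2: "d3 (crs p q) q = 0" by (simp add: d3_def crs_def algebra_simps)

lemma gen_plane:
  fixes m d :: "nat \<Rightarrow> real" and Fs Gs Xs Ks :: "(nat \<Rightarrow> real) set"
  assumes m: "nz m" and d: "nz d" "vec3 d" and dm: "d3 d m = 0"
    and Fs: "finite Fs" "\<forall>f\<in>Fs. d3 d f \<noteq> 0"
    and Gs: "finite Gs" "\<forall>g\<in>Gs. nz g"
    and Xs: "finite Xs"
    and Ks: "finite Ks" "\<forall>k\<in>Ks. d3 k d \<noteq> 0 \<or> d3 k (crs m d) \<noteq> 0"
  shows "\<exists>p. vec3 p \<and> nz p \<and> d3 p m = 0 \<and> (\<forall>f\<in>Fs. d3 p f \<noteq> 0) \<and>
     (\<forall>g\<in>Gs. nz (crs p g)) \<and> (\<forall>x\<in>Xs. p \<noteq> x) \<and> (\<forall>k\<in>Ks. d3 p k \<noteq> 0)"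
proof -
  define d2 where "d2 = crs m d"
  define P where "P = (\<lambda>t::real. \<lambda>i. d i + t * d2 i)"
  have vP: "vec3 (P t)" for t using d(2) by (simp add: P_def d2_def vec3_def crs_def)
  have dP: "d3 (P t) f = d3 d f + t * d3 d2 f" for t f by (simp add: P_def d3_def algebra_simps)
  have cP: "crs (P t) g i = crs d g i + t * crs d2 g i" if "i \<in> {0,1,2}" for t g i
    using that by (auto simp: P_def algebra_simps)
  have dd2: "crs d d2 i = d3 d d * m i" if "i \<in> {0,1,2}" for i
  proof -
    have "crs d d2 i = d3 d d * m i - d3 d m * d i" using that
      by (auto simp: d2_def d3_def algebra_simps)
    then show ?thesis using dm by simp
  qed
  have nzdd2: "nz (crs d d2)"
  proof -
    have "crs d d2 0 = d3 d d * m 0" "crs d d2 1 = d3 d d * m 1" "crs d d2 2 = d3 d d * m 2"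
      using dd2[of 0] dd2[of 1] dd2[of 2] by auto
    then show ?thesis unfolding nz_def using m d3_self_nz[OF d(1)] unfolding nz_def
      by (metis mult_eq_0_iff)
  qed
  have nzd2: "nz d2"
    using nzdd2 by (auto simp: nz_def)
  have d2m: "d3 d2 m = 0" by (simp add: d2_def d3_def algebra_simps)
  have fF: "finite {t. d3 (P t) f = 0}" if "d3 d f \<noteq> 0 \<or> d3 d2 f \<noteq> 0" for f
    unfolding dP using fin_lin[OF that] .
  have fG: "finite {t. \<not> nz (crs (P t) g)}" if "nz g" for g
  proof -
    have "nz (crs d g) \<or> nz (crs d2 g)" using par[OF that, of d d2] nzdd2 by blast
    then have "\<exists>i\<in>{0,1,2}. crs d g i \<noteq> 0 \<or> crs d2 g i \<noteq> 0"
      unfolding nz_def by (metis insertI1 insertI2)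
    then obtain i where i: "i \<in> {0,1,2}" "crs d g i \<noteq> 0 \<or> crs d2 g i \<noteq> 0"
      by blast
    have "{t. \<not> nz (crs (P t) g)} \<subseteq> {t. crs d g i + t * crs d2 g i = 0}"
    proof
      fix t assume "t \<in> {t. \<not> nz (crs (P t) g)}"
      then have "crs (P t) g i = 0" using i(1) unfolding nz_def by auto
      then show "t \<in> {t. crs d g i + t * crs d2 g i = 0}" using cP[OF i(1)] by simp
    qed
    then show ?thesis using fin_lin[OF i(2)] finite_subset by blast
  qed
  have fX: "finite {t. P t = x}" for x
  proof -
    have "\<exists>i\<in>{0,1,2}. d2 i \<noteq> 0" using nzd2 unfolding nz_def by (metis insertI1 insertI2)
    then obtain i where i: "i \<in> {0,1,2}" "d2 i \<noteq> 0" by blast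
    have "{t. P t = x} \<subseteq> {t. (d i - x i) + t * d2 i = 0}" by (auto simp: P_def)
    then show ?thesis using fin_lin[of "d i - x i" "d2 i"] i finite_subset by blast
  qed
  define B where "B = (\<Union>f\<in>Fs. {t. d3 (P t) f = 0}) \<union> (\<Union>g\<in>Gs. {t. \<not> nz (crs (P t) g)})
     \<union> (\<Union>x\<in>Xs. {t. P t = x}) \<union> (\<Union>k\<in>Ks. {t. d3 (P t) k = 0}) \<union> {t. d3 (P t) d = 0}"
  have f1: "finite (\<Union>f\<in>Fs. {t. d3 (P t) f = 0})"
    using Fs fF by blast
  have f2: "finite (\<Union>g\<in>Gs. {t. \<not> nz (crs (P t) g)})" using Gs fG by blast
  have f3: "finite (\<Union>x\<in>Xs. {t. P t = x})" using Xs fX by blast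
  have f4: "finite (\<Union>k\<in>Ks. {t. d3 (P t) k = 0})"
  proof (rule finite_UN_I[OF Ks(1)])
    fix k assume "k \<in> Ks"
    then have "d3 d k \<noteq> 0 \<or> d3 d2 k \<noteq> 0" using Ks(2) d3_comm[of k d] d3_comm[of k d2]
      unfolding d2_def by metis
    then show "finite {t. d3 (P t) k = 0}" by (rule fF)
  qed
  have f5: "finite {t. d3 (P t) d = 0}" using fF d3_self_nz[OF d(1)] by blast
  have "finite B" unfolding B_def using f1 f2 f3 f4 f5 by blast
  then obtain t where t: "t \<notin> B" using ex_new_if_finite infinite_UNIV_char_0 by blast
  have "d3 (P t) m = 0" using dP[of t m] dm d2m by simp
  moreover have "nz (P t)" using t nz_d3[of "P t" d] unfolding B_def by blast
  ultimately show ?thesis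
    apply -
    apply (rule exI[of _ "P t"])
    using t vP[of t] unfolding B_def by blast
qed

definition rep :: "'a set \<Rightarrow> ('a \<Rightarrow> 'a \<Rightarrow> bool) \<Rightarrow> ('a \<Rightarrow> nat \<Rightarrow> real) \<Rightarrow> bool" where
  "rep V E \<phi> = ((\<forall>x\<in>V. vec3 (\<phi> x) \<and> nz (\<phi> x)) \<and>
     (\<forall>x\<in>V. \<forall>y\<in>V. x \<noteq> y \<longrightarrow> (d3 (\<phi> x) (\<phi> y) = 0 \<longleftrightarrow> E x y)))"

lemma orth_rep_iff: "orth_rep V (compl_graph V E) 3 \<phi> \<longleftrightarrow> rep V E \<phi>"
proof -
  have "(\<forall>i\<ge>3. \<phi> x i = 0) \<and> (\<exists>i<3. \<phi> x i \<noteq> 0) \<longleftrightarrow> vec3 (\<phi> x) \<and> nz (\<phi> x)" for x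
    using nz_iff[of "\<phi> x"] by (auto simp: vec3_def)
  then show ?thesis unfolding orth_rep_def rep_def compl_graph_def dot3 by auto
qed

lemma upd:
  assumes r: "rep V E \<phi>" and inj: "inj_on \<phi> V" and y: "y \<in> V" and p: "vec3 p" "nz p"
    and o: "\<forall>x\<in>V. x \<noteq> y \<longrightarrow> (d3 p (\<phi> x) = 0 \<longleftrightarrow> E y x)"
    and ne: "\<forall>x\<in>V. x \<noteq> y \<longrightarrow> p \<noteq> \<phi> x"
    and sym: "\<forall>x y. E x y \<longrightarrow> E y x"
  shows "rep V E (\<phi>(y:=p)) \<and> inj_on (\<phi>(y:=p)) V"
proof
  show "rep V E (\<phi>(y:=p))" using r p o sym unfolding rep_def
    by (auto simp: d3_comm[of _ p])
  show "inj_on (\<phi>(y:=p)) V" using inj ne unfolding inj_on_def by (simp, metis)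
qed

lemma step:
  assumes r: "rep V E \<phi>" and inj: "inj_on \<phi> V" and fin: "finite V"
    and sym: "\<forall>x y. E x y \<longrightarrow> E y x"
    and y: "y \<in> V" and z: "z \<in> V" "z \<noteq> y" and nb: "\<forall>x\<in>V. x \<noteq> y \<longrightarrow> (E y x \<longleftrightarrow> x = z)"
    and Gs: "finite Gs" "\<forall>g\<in>Gs. nz g"
    and Ks: "finite Ks" "\<forall>k\<in>Ks. d3 k (\<phi> y) \<noteq> 0 \<or> d3 k (crs (\<phi> z) (\<phi> y)) \<noteq> 0"
  shows "\<exists>p. rep V E (\<phi>(y:=p)) \<and> inj_on (\<phi>(y:=p)) V \<and> (\<forall>x\<in>V-{y,z}. d3 p (\<phi> x) \<noteq> 0)
     \<and> d3 p (\<phi> z) = 0 \<and> (\<forall>g\<in>Gs. nz (crs p g)) \<and> (\<forall>k\<in>Ks. d3 p k \<noteq> 0) \<and> nz p \<and> vec3 p"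
proof -
  have ry: "vec3 (\<phi> y)" "nz (\<phi> y)" "nz (\<phi> z)" using r y z unfolding rep_def by auto
  have yz: "d3 (\<phi> y) (\<phi> z) = 0" using r y z nb unfolding rep_def by auto
  have F: "\<forall>f\<in>\<phi>`(V-{y,z}). d3 (\<phi> y) f \<noteq> 0" using r y nb unfolding rep_def by auto
  obtain p where p: "vec3 p" "nz p" "d3 p (\<phi> z) = 0" "\<forall>f\<in>\<phi>`(V-{y,z}). d3 p f \<noteq> 0"
     "\<forall>g\<in>Gs. nz (crs p g)" "\<forall>x\<in>\<phi>`(V-{y}). p \<noteq> x" "\<forall>k\<in>Ks. d3 p k \<noteq> 0"
    using gen_plane[OF ry(3) ry(2) ry(1) yz _ F Gs _ Ks, of "\<phi>`(V-{y})"] fin by auto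
  have o: "\<forall>x\<in>V. x \<noteq> y \<longrightarrow> (d3 p (\<phi> x) = 0 \<longleftrightarrow> E y x)" using p(3,4) nb by auto
  have ne: "\<forall>x\<in>V. x \<noteq> y \<longrightarrow> p \<noteq> \<phi> x" using p(6) by auto
  show ?thesis using upd[OF r inj y p(1,2) o ne sym] p by auto
qed

lemma final:
  assumes r: "rep V E \<phi>" and inj: "inj_on \<phi> V" and fin: "finite V"
    and vV: "v \<in> V" and wV: "w \<in> V" and u: "u \<notin> V" and EV: "\<forall>x y. E x y \<longrightarrow> x \<in> V \<and> y \<in> V"
    and n: "vec3 n" "nz n" "d3 n (\<phi> v) = 0" "d3 n (\<phi> w) = 0" "\<forall>x\<in>V-{v,w}. d3 n (\<phi> x) \<noteq> 0"
    and EG: "EG = (\<lambda>x y. E x y \<or> (x = u \<and> (y = v \<or> y = w)) \<or> (y = u \<and> (x = v \<or> x = w)))"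
  shows "\<exists>\<psi>. rep (insert u V) EG \<psi> \<and> inj_on \<psi> (insert u V)"
proof -
  define S where "S = (\<lambda>s::real. \<lambda>i. s * n i)"
  have "\<exists>i\<in>{0,1,2}. n i \<noteq> 0" using n(2) unfolding nz_def by (metis insertI1 insertI2)
  then obtain i where i: "n i \<noteq> 0" by blast
  have fx: "finite {s. S s = \<phi> x}" for x
  proof -
    have "{s. S s = \<phi> x} \<subseteq> {s. (- \<phi> x i) + s * n i = 0}"
    proof
      fix s assume "s \<in> {s. S s = \<phi> x}"
      then have "S s i = \<phi> x i" by simp
      then show "s \<in> {s. (- \<phi> x i) + s * n i = 0}" by (simp add: S_def)
    qed
    then show ?thesis using fin_lin[of "- \<phi> x i" "n i"] i finite_subset by blast
  qed
  have "finite ({0} \<union> (\<Union>x\<in>V. {s. S s = \<phi> x}))" using fin fx by blast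
  then obtain s where s: "s \<notin> {0} \<union> (\<Union>x\<in>V. {s. S s = \<phi> x})"
    using ex_new_if_finite infinite_UNIV_char_0 by blast
  have Ss: "vec3 (S s)" "nz (S s)" using n(1,2) s by (auto simp: S_def vec3_def nz_def)
  have dS: "d3 (S s) f = s * d3 n f" for f by (simp add: S_def d3_def algebra_simps)
  define \<psi> where "\<psi> = \<phi>(u := S s)"
  have "rep (insert u V) EG \<psi>"
    unfolding rep_def
  proof (rule conjI)
    show "\<forall>x\<in>insert u V. vec3 (\<psi> x) \<and> nz (\<psi> x)" using r Ss unfolding rep_def \<psi>_def by auto
  next
    show "\<forall>x\<in>insert u V. \<forall>y\<in>insert u V. x \<noteq> y \<longrightarrow> (d3 (\<psi> x) (\<psi> y) = 0) = EG x y"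
    proof (intro ballI impI)
    fix x y assume xy: "x \<in> insert u V" "y \<in> insert u V" "x \<noteq> y"
    have uu: "d3 (S s) (\<phi> z) = 0 \<longleftrightarrow> z = v \<or> z = w" if "z \<in> V" for z
      using that n(3,4,5) s dS[of "\<phi> z"] by auto
    show "d3 (\<psi> x) (\<psi> y) = 0 \<longleftrightarrow> EG x y"
    proof (cases "x = u")
      case True then show ?thesis using xy uu u vV wV EV unfolding EG \<psi>_def by auto
    next
      case False
      show ?thesis
      proof (cases "y = u")
        case True then show ?thesis using xy uu u False EV unfolding EG \<psi>_def
          by (auto simp: d3_comm[of _ "S s"])
      next
        case False2: False
        then show ?thesis using xy False r u unfolding EG \<psi>_def rep_def by auto
      qed
    qed
    qed
  qed
  moreover have "inj_on \<psi> (insert u V)" using inj s u unfolding \<psi>_def inj_on_def by auto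
  ultimately show ?thesis by blast
qed


theorem lemma4p5:
  fixes V :: "'a set" and E :: "'a \<Rightarrow> 'a \<Rightarrow> bool" and u v w :: 'a
    and EG :: "'a \<Rightarrow> 'a \<Rightarrow> bool"
  assumes H: "graph V E"
    and vV: "v \<in> V" and wV: "w \<in> V"
    and dv: "degree V E v = 1" and dw: "degree V E w = 1"
    and nocommon: "\<not> (\<exists>x\<in>V. E v x \<and> E w x)"
    and u_new: "u \<notin> V"
    and EG_def: "EG = (\<lambda>x y. E x y \<or> (x = u \<and> (y = v \<or> y = w)) \<or> (y = u \<and> (x = v \<or> x = w)))"
    and repH: "\<exists>\<phi>. orth_rep V (compl_graph V E) 3 \<phi> \<and> inj_on \<phi> V"
  shows "(\<exists>\<psi>. orth_rep (insert u V) (compl_graph (insert u V) EG) 3 \<psi> \<and> inj_on \<psi> (insert u V))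
         \<and> mvr (insert u V) (compl_graph (insert u V) EG) \<le> 3"
proof -
  have fin: "finite V" and EV: "\<forall>x y. E x y \<longrightarrow> x \<in> V \<and> y \<in> V"
    and sym: "\<forall>x y. E x y \<longrightarrow> E y x" and irr: "\<forall>x. \<not> E x x"
    using H unfolding graph_def by auto
  obtain \<phi> where r: "rep V E \<phi>" and inj: "inj_on \<phi> V" using repH orth_rep_iff by blast
  obtain a where a: "{y\<in>V. E v y} = {a}" using dv unfolding degree_def by (meson card_1_singletonE)
  obtain b where b: "{y\<in>V. E w y} = {b}" using dw unfolding degree_def by (meson card_1_singletonE)
  have aV: "a \<in> V" "E v a" and nba: "\<forall>x\<in>V. x \<noteq> v \<longrightarrow> (E v x \<longleftrightarrow> x = a)" using a by auto
  have bV: "b \<in> V" "E w b" and nbb: "\<forall>x\<in>V. x \<noteq> w \<longrightarrow> (E w x \<longleftrightarrow> x = b)" using b by auto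
  have av: "a \<noteq> v" using aV irr by auto
  have bw: "b \<noteq> w" using bV irr by auto
  have ab: "a \<noteq> b" using nocommon aV bV by auto
  have vw: "v \<noteq> w" using nocommon aV by auto
  have rr: "\<forall>x\<in>V. vec3 (\<phi> x) \<and> nz (\<phi> x)" using r unfolding rep_def by auto
  have fin2: "finite (V - {v,w})" using fin by auto
  obtain \<phi>2 n where r2: "rep V E \<phi>2" and inj2: "inj_on \<phi>2 V"
    and n: "vec3 n" "nz n" "d3 n (\<phi>2 v) = 0" "d3 n (\<phi>2 w) = 0" "\<forall>x\<in>V-{v,w}. d3 n (\<phi>2 x) \<noteq> 0"
  proof (cases "a = w")
    case False
    have bv: "b \<noteq> v" using False nba sym bV wV vw by metis
    obtain p where p: "rep V E (\<phi>(v:=p))" "inj_on (\<phi>(v:=p)) V" "\<forall>x\<in>V-{v,a}. d3 p (\<phi> x) \<noteq> 0"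
      "\<forall>g\<in>\<phi>`(V-{v}). nz (crs p g)" "nz p" "vec3 p"
      using step[OF r inj fin sym vV aV(1) av nba, of "\<phi>`(V-{v})" "{}"] fin rr by auto
    define \<phi>1 where "\<phi>1 = \<phi>(v:=p)"
    have K: "\<forall>k\<in>(\<lambda>x. crs p (\<phi> x))`(V-{v,w}). d3 k (\<phi>1 w) \<noteq> 0 \<or> d3 k (crs (\<phi>1 b) (\<phi>1 w)) \<noteq> 0"
    proof
      fix k assume "k \<in> (\<lambda>x. crs p (\<phi> x))`(V-{v,w})"
      then obtain x where x: "x \<in> V-{v,w}" "k = crs p (\<phi> x)" by auto
      have "d3 (\<phi> w) (\<phi> b) = 0" using r wV bV bw unfolding rep_def by auto
      moreover have "d3 p (\<phi> b) \<noteq> 0" using p(3) bV bv ab by auto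
      moreover have "nz (crs p (\<phi> x))" using p(4) x by auto
      ultimately show "d3 k (\<phi>1 w) \<noteq> 0 \<or> d3 k (crs (\<phi>1 b) (\<phi>1 w)) \<noteq> 0"
        using Klem[of "\<phi> w" "\<phi> b" p "\<phi> x"] rr wV x vw bv unfolding \<phi>1_def by auto
    qed
    obtain q where q: "rep V E (\<phi>1(w:=q))" "inj_on (\<phi>1(w:=q)) V" "\<forall>x\<in>V-{w,b}. d3 q (\<phi>1 x) \<noteq> 0"
      "d3 q (\<phi>1 b) = 0" "\<forall>k\<in>(\<lambda>x. crs p (\<phi> x))`(V-{v,w}). d3 q k \<noteq> 0" "nz q" "vec3 q"
      using step[OF p(1,2)[folded \<phi>1_def] fin sym wV bV(1) bw nbb, of "{}" "(\<lambda>x. crs p (\<phi> x))`(V-{v,w})"]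
        K fin2 by auto
    define n where "n = crs p q"
    have nx: "\<forall>x\<in>V-{v,w}. d3 n ((\<phi>1(w:=q)) x) \<noteq> 0"
      using q(5) triple2[of p q] unfolding n_def \<phi>1_def by auto
    have "nz n" using nx bV bv bw nz_d3 by blast
    moreover have "d3 n ((\<phi>1(w:=q)) v) = 0" "d3 n ((\<phi>1(w:=q)) w) = 0"
      using vw crs_orth1 crs_orth2 unfolding n_def \<phi>1_def by auto
    ultimately show ?thesis using that[OF q(1,2), of n] nx unfolding n_def by auto
  next
    case True
    have bv: "b = v" using True nbb sym aV vV vw by auto
    have nbw: "\<forall>x\<in>V. x \<noteq> w \<longrightarrow> (E w x \<longleftrightarrow> x = v)" using nbb bv by auto
    have nbv: "\<forall>x\<in>V. x \<noteq> v \<longrightarrow> (E v x \<longleftrightarrow> x = w)" using nba True by auto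
    obtain q where q: "rep V E (\<phi>(w:=q))" "inj_on (\<phi>(w:=q)) V" "\<forall>x\<in>V-{w,v}. d3 q (\<phi> x) \<noteq> 0"
      "d3 q (\<phi> v) = 0" "\<forall>g\<in>\<phi>`(V-{w}). nz (crs q g)" "nz q" "vec3 q"
      using step[OF r inj fin sym wV vV vw nbw, of "\<phi>`(V-{w})" "{}"] fin rr by auto
    define \<phi>1 where "\<phi>1 = \<phi>(w:=q)"
    have K: "\<forall>k\<in>(\<lambda>x. crs q (\<phi> x))`(V-{v,w}). d3 k (\<phi>1 v) \<noteq> 0 \<or> d3 k (crs (\<phi>1 w) (\<phi>1 v)) \<noteq> 0"
    proof
      fix k assume "k \<in> (\<lambda>x. crs q (\<phi> x))`(V-{v,w})"
      then obtain x where x: "x \<in> V-{v,w}" "k = crs q (\<phi> x)" by auto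
      have "d3 (\<phi> v) q = 0" using q(4) d3_comm by metis
      moreover have "d3 q q \<noteq> 0" using q(6) d3_self_nz by auto
      moreover have "nz (crs q (\<phi> x))" using q(5) x by auto
      ultimately show "d3 k (\<phi>1 v) \<noteq> 0 \<or> d3 k (crs (\<phi>1 w) (\<phi>1 v)) \<noteq> 0"
        using Klem[of "\<phi> v" q q "\<phi> x"] rr vV x vw unfolding \<phi>1_def by auto
    qed
    obtain p where p: "rep V E (\<phi>1(v:=p))" "inj_on (\<phi>1(v:=p)) V" "\<forall>x\<in>V-{v,w}. d3 p (\<phi>1 x) \<noteq> 0"
      "d3 p (\<phi>1 w) = 0" "\<forall>k\<in>(\<lambda>x. crs q (\<phi> x))`(V-{v,w}). d3 p k \<noteq> 0" "nz p" "vec3 p"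
      using step[OF q(1,2)[folded \<phi>1_def] fin sym vV wV vw[symmetric] nbv, of "{}" "(\<lambda>x. crs q (\<phi> x))`(V-{v,w})"]
        K fin2 by auto
    define n where "n = crs p q"
    have nx: "\<forall>x\<in>V-{v,w}. d3 n ((\<phi>1(v:=p)) x) \<noteq> 0"
      using p(5) triple[of p q] unfolding n_def \<phi>1_def by auto
    have "nz n" using crs_nz_orth[OF p(6) q(6)] p(4) vw unfolding n_def \<phi>1_def by auto
    moreover have "d3 n ((\<phi>1(v:=p)) v) = 0" "d3 n ((\<phi>1(v:=p)) w) = 0"
      using vw crs_orth1 crs_orth2 unfolding n_def \<phi>1_def by auto
    ultimately show ?thesis using that[OF p(1,2), of n] nx unfolding n_def by auto
  qed
  obtain \<psi> where \<psi>: "rep (insert u V) EG \<psi>" "inj_on \<psi> (insert u V)"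
    using final[OF r2 inj2 fin vV wV u_new EV n EG_def] by blast
  have o: "orth_rep (insert u V) (compl_graph (insert u V) EG) 3 \<psi>" using \<psi>(1) orth_rep_iff by blast
  have "mvr (insert u V) (compl_graph (insert u V) EG) \<le> 3"
    unfolding mvr_def by (rule Least_le) (use o in blast)
  then show ?thesis using o \<psi>(2) by blast
qed

end
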